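(* Let $\mathcal{N}$ be a 2-step nilpotent Lie algebra over $\mathbb{R}$ whose commutator ideal $\mathcal{Z}=[\mathcal{N},\mathcal{N}]$ coincides with its center, and let $\mathcal{N}=\mathcal{V}\oplus\mathcal{Z}$ for a subspace $\mathcal{V}$. Suppose that every Lie ring automorphism $f$ of $\mathcal{N}$ with $f(\mathcal{V})=\mathcal{V}$ is a Lie algebra automorphism. Then for every Lie ring automorphism $f$ of $\mathcal{N}$ there exist a central automorphism $\mu$ and a Lie algebra automorphism $\overline{f}$ of $\mathcal{N}$ such that $f=\mu\circ\overline{f}$.
   Context: A Lie ring automorphism of a real Lie algebra is a bijective additive map preserving the bracket (not necessarily $\mathbb{R}$-linear); a Lie algebra automorphism is an $\mathbb{R}$-linear one. A central automorphism is a Lie ring automorphism $\mu$ with $\mu(x)-x$ in the center of $\mathcal{N}$ for all $x\in\mathcal{N}$. *)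

theory Defs
  imports Main Complex_Main
begin

definition lie_algebra :: "('a::real_vector \<Rightarrow> 'a \<Rightarrow> 'a) \<Rightarrow> bool" where
  "lie_algebra br \<longleftrightarrow>
     (\<forall>x y z. br (x + y) z = br x z + br y z) \<and>
     (\<forall>x y z. br x (y + z) = br x y + br x z) \<and>
     (\<forall>a x y. br (a *\<^sub>R x) y = a *\<^sub>R br x y) \<and>
     (\<forall>a x y. br x (a *\<^sub>R y) = a *\<^sub>R br x y) \<and>
     (\<forall>x. br x x = 0) \<and>
     (\<forall>x y z. br x (br y z) + br y (br z x) + br z (br x y) = 0)"

definition lie_center :: "('a::real_vector \<Rightarrow> 'a \<Rightarrow> 'a) \<Rightarrow> 'a set" where
  "lie_center br = {z. \<forall>x. br z x = 0}"

definition commutator_ideal :: "('a::real_vector \<Rightarrow> 'a \<Rightarrow> 'a) \<Rightarrow> 'a set" where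
  "commutator_ideal br = span {br x y | x y. True}"

definition two_step_nilpotent :: "('a::real_vector \<Rightarrow> 'a \<Rightarrow> 'a) \<Rightarrow> bool" where
  "two_step_nilpotent br \<longleftrightarrow>
     (\<forall>x y z. br x (br y z) = 0) \<and> (\<exists>x y. br x y \<noteq> 0)"

definition lie_ring_aut :: "('a::real_vector \<Rightarrow> 'a \<Rightarrow> 'a) \<Rightarrow> ('a \<Rightarrow> 'a) \<Rightarrow> bool" where
  "lie_ring_aut br f \<longleftrightarrow> bij f \<and> (\<forall>x y. f (x + y) = f x + f y) \<and>
     (\<forall>x y. f (br x y) = br (f x) (f y))"

definition lie_algebra_aut :: "('a::real_vector \<Rightarrow> 'a \<Rightarrow> 'a) \<Rightarrow> ('a \<Rightarrow> 'a) \<Rightarrow> bool" where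
  "lie_algebra_aut br f \<longleftrightarrow> lie_ring_aut br f \<and> linear f"

definition central_aut :: "('a::real_vector \<Rightarrow> 'a \<Rightarrow> 'a) \<Rightarrow> ('a \<Rightarrow> 'a) \<Rightarrow> bool" where
  "central_aut br \<mu> \<longleftrightarrow> lie_ring_aut br \<mu> \<and> (\<forall>x. \<mu> x - x \<in> lie_center br)"

end

theory Submission
  imports Defs
begin

lemma ra_0: assumes "lie_ring_aut br f" shows "f 0 = 0"
proof -
  have "f (0+0) = f 0 + f 0" using assms unfolding lie_ring_aut_def by blast
  then show ?thesis by simp
qed

lemma ra_diff: assumes "lie_ring_aut br f" shows "f (x - y) = f x - f y"
proof -
  have "f ((x - y) + y) = f (x - y) + f y" using assms unfolding lie_ring_aut_def by blast
  then show ?thesis by (simp add: algebra_simps)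
qed

lemma ra_inv: assumes "lie_ring_aut br f" shows "lie_ring_aut br (inv f)"
proof -
  have b: "bij f" and ad: "\<And>x y. f (x + y) = f x + f y" and brr: "\<And>x y. f (br x y) = br (f x) (f y)"
    using assms unfolding lie_ring_aut_def by blast+
  have fi: "\<And>x. f (inv f x) = x" using b by (simp add: bij_is_surj surj_f_inv_f)
  have if_: "\<And>x. inv f (f x) = x" using b by (simp add: bij_is_inj)
  have "bij (inv f)" using b by (simp add: bij_imp_bij_inv)
  moreover have "inv f (x + y) = inv f x + inv f y" for x y
  proof -
    have "f (inv f x + inv f y) = x + y" by (simp add: ad fi)
    hence "inv f (x + y) = inv f (f (inv f x + inv f y))" by simp
    thus ?thesis by (simp only: if_)
  qed
  moreover have "inv f (br x y) = br (inv f x) (inv f y)" for x y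
  proof -
    have "f (br (inv f x) (inv f y)) = br x y" by (simp add: brr fi)
    hence "inv f (br x y) = inv f (f (br (inv f x) (inv f y)))" by simp
    thus ?thesis by (simp only: if_)
  qed
  ultimately show ?thesis unfolding lie_ring_aut_def by blast
qed

lemma ra_comp: assumes "lie_ring_aut br f" "lie_ring_aut br g" shows "lie_ring_aut br (f \<circ> g)"
  using assms unfolding lie_ring_aut_def by (auto intro: bij_comp)

lemma ra_center: assumes "lie_ring_aut br f" "lie_algebra br" "z \<in> lie_center br"
  shows "f z \<in> lie_center br"
proof -
  have b: "bij f" and brr: "\<And>x y. f (br x y) = br (f x) (f y)"
    using assms unfolding lie_ring_aut_def by blast+
  have "br (f z) y = 0" for y
  proof -
    obtain w where "y = f w" using b by (metis bij_pointE)
    then show ?thesis using brr[of z w] assms(3) ra_0[OF assms(1)] unfolding lie_center_def by simp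
  qed
  then show ?thesis unfolding lie_center_def by simp
qed

lemma la_anti: assumes "lie_algebra br" shows "br y x = - br x y"
proof -
  have a1: "\<And>x y z. br (x + y) z = br x z + br y z" and a2: "\<And>x y z. br x (y + z) = br x y + br x z"
    and a5: "\<And>x. br x x = 0" using assms unfolding lie_algebra_def by blast+
  have "0 = br (x+y) (x+y)" using a5 by simp
  also have "\<dots> = br x x + br x y + (br y x + br y y)" by (simp add: a1 a2 add.assoc)
  finally show ?thesis using a5 by (simp add: eq_neg_iff_add_eq_0 add.commute)
qed

lemma la_center_r: assumes "lie_algebra br" "z \<in> lie_center br" shows "br y z = 0"
  using la_anti[OF assms(1), of z y] assms(2) unfolding lie_center_def by simp

lemma la_br_central: assumes "lie_algebra br" "c \<in> lie_center br" "d \<in> lie_center br"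
  shows "br (a + c) (b + d) = br a b"
proof -
  have a1: "\<And>x y z. br (x + y) z = br x z + br y z" and a2: "\<And>x y z. br x (y + z) = br x y + br x z"
    using assms unfolding lie_algebra_def by blast+
  have "br (a + c) (b + d) = br a b + br a d + (br c b + br c d)" by (simp add: a1 a2)
  moreover have "br a d = 0" using la_center_r[OF assms(1) assms(3)] .
  moreover have "br c b = 0" "br c d = 0" using assms(2) unfolding lie_center_def by blast+
  ultimately show ?thesis by simp
qed

theorem proposition3p2:
  fixes br :: "'a::real_vector \<Rightarrow> 'a \<Rightarrow> 'a" and V :: "'a set"
  assumes "lie_algebra br"
    and "two_step_nilpotent br"
    and "commutator_ideal br = lie_center br"
    and "subspace V"
    and "V \<inter> commutator_ideal br = {0}"
    and "{v + z | v z. v \<in> V \<and> z \<in> commutator_ideal br} = UNIV"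
    and "\<forall>f. lie_ring_aut br f \<and> f ` V = V \<longrightarrow> lie_algebra_aut br f"
  shows "\<forall>f. lie_ring_aut br f \<longrightarrow>
           (\<exists>\<mu> g. central_aut br \<mu> \<and> lie_algebra_aut br g \<and> f = \<mu> \<circ> g)"
proof (intro allI impI)
  fix f assume fa: "lie_ring_aut br f"
  define Z where "Z = commutator_ideal br"
  have Zs: "subspace Z" unfolding Z_def commutator_ideal_def by (rule subspace_span)
  have ZC: "Z = lie_center br" using assms(3) Z_def by simp
  have VZ: "\<And>x. x \<in> V \<Longrightarrow> x \<in> Z \<Longrightarrow> x = 0" using assms(5) Z_def by blast
  have ex: "\<exists>v. v \<in> V \<and> x - v \<in> Z" for x
  proof -
    have "x \<in> {v + z | v z. v \<in> V \<and> z \<in> Z}" using assms(6) Z_def by simp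
    then obtain v z where "v \<in> V" "z \<in> Z" "x = v + z" by blast
    then show ?thesis by (intro exI[of _ v]) simp
  qed
  define pV where "pV x = (SOME v. v \<in> V \<and> x - v \<in> Z)" for x
  have pV1: "pV x \<in> V" and pV2: "x - pV x \<in> Z" for x
    using someI_ex[OF ex[of x]] unfolding pV_def by blast+
  have pVu: "pV x = v" if "v \<in> V" "x - v \<in> Z" for x v
  proof -
    have "pV x - v \<in> V" using pV1 that(1) assms(4) by (simp add: subspace_diff)
    moreover have "pV x - v = (x - v) - (x - pV x)" by simp
    hence "pV x - v \<in> Z" using pV2 that(2) Zs by (metis subspace_diff)
    ultimately show ?thesis using VZ by fastforce
  qed
  have pVadd: "pV (x + y) = pV x + pV y" for x y
  proof (rule pVu)
    show "pV x + pV y \<in> V" using pV1 assms(4) by (simp add: subspace_add)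
    have "x + y - (pV x + pV y) = (x - pV x) + (y - pV y)" by simp
    then show "x + y - (pV x + pV y) \<in> Z" using pV2 Zs by (metis subspace_add)
  qed
  have pVZ: "z \<in> Z \<Longrightarrow> pV z = 0" for z
    using pVu[of 0 z] assms(4) by (simp add: subspace_0)
  have pV0: "pV 0 = 0" using pVZ Zs by (simp add: subspace_0)
  have pVV: "v \<in> V \<Longrightarrow> pV v = v" for v
    using pVu[of v v] Zs by (simp add: subspace_0)
  have fb: "bij f" and fad: "\<And>x y. f (x + y) = f x + f y" and fbr: "\<And>x y. f (br x y) = br (f x) (f y)"
    using fa unfolding lie_ring_aut_def by blast+
  have fZ: "z \<in> Z \<Longrightarrow> f z \<in> Z" for z using ra_center[OF fa assms(1)] ZC by simp
  have fiZ: "z \<in> Z \<Longrightarrow> inv f z \<in> Z" for z using ra_center[OF ra_inv[OF fa] assms(1)] ZC by simp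
  have fi: "\<And>x. f (inv f x) = x" using fb by (simp add: bij_is_surj surj_f_inv_f)
  have if_: "\<And>x. inv f (f x) = x" using fb by (simp add: bij_is_inj)
  define g where "g x = pV (f (pV x)) + f (x - pV x)" for x
  have gdiff: "f x - g x \<in> Z" for x
  proof -
    have "f x = f (pV x) + f (x - pV x)" using fad[of "pV x" "x - pV x"] by simp
    hence "f x - g x = f (pV x) - pV (f (pV x))" unfolding g_def by (simp add: algebra_simps)
    thus ?thesis using pV2 by simp
  qed
  have gad: "g (x + y) = g x + g y" for x y
  proof -
    have "x + y - pV (x + y) = (x - pV x) + (y - pV y)" using pVadd by simp
    hence "f (x + y - pV (x + y)) = f ((x - pV x) + (y - pV y))" by (rule arg_cong)
    hence "f (x + y - pV (x + y)) = f (x - pV x) + f (y - pV y)" by (simp only: fad)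
    moreover have "f (pV (x + y)) = f (pV x) + f (pV y)" using pVadd fad by simp
    ultimately show ?thesis unfolding g_def using pVadd by (simp add: algebra_simps)
  qed
  have gbr: "g (br x y) = br (g x) (g y)" for x y
  proof -
    have bz: "br x y \<in> Z" unfolding Z_def commutator_ideal_def by (rule span_base) blast
    have "g (br x y) = f (br x y)" unfolding g_def using pVZ[OF bz] ra_0[OF fa] pV0 by simp
    also have "\<dots> = br (f x) (f y)" by (rule fbr)
    also have "\<dots> = br (g x + (f x - g x)) (g y + (f y - g y))" by simp
    also have "\<dots> = br (g x) (g y)" using gdiff ZC by (intro la_br_central[OF assms(1)]) simp_all
    finally show ?thesis .
  qed
  have gV: "g v \<in> V" if "v \<in> V" for v
    unfolding g_def using pVV[OF that] pV1 ra_0[OF fa] pV0 by simp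
  have g0: "g x = 0 \<Longrightarrow> x = 0" for x
  proof -
    assume h: "g x = 0"
    have a: "f (x - pV x) \<in> Z" using fZ pV2 by simp
    have "pV (f (pV x)) = - f (x - pV x)" using h unfolding g_def by (simp add: eq_neg_iff_add_eq_0)
    hence "pV (f (pV x)) \<in> Z" using a Zs by (simp add: subspace_neg)
    hence p0: "pV (f (pV x)) = 0" using VZ pV1 by blast
    hence "f (x - pV x) = 0" using h unfolding g_def by simp
    hence e1: "x - pV x = 0" by (metis if_ ra_0[OF fa])
    have "f (pV x) - pV (f (pV x)) \<in> Z" using pV2 by simp
    hence "f (pV x) \<in> Z" using p0 by simp
    hence "pV x \<in> Z" using fiZ if_ by metis
    hence "pV x = 0" using VZ pV1 by blast
    thus "x = 0" using e1 by simp
  qed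
  have ginj: "inj g"
  proof (rule injI)
    fix x y assume "g x = g y"
    hence "g (x - y) = 0" using gad[of "x - y" y] by simp
    hence "x - y = 0" by (rule g0)
    thus "x = y" by simp
  qed
  have gsV: "\<exists>a\<in>V. g a = v" if "v \<in> V" for v
  proof -
    define a where "a = inv f v"
    have "f a = f (pV a) + f (a - pV a)" using fad[of "pV a" "a - pV a"] by simp
    hence e: "f (pV a) = v - f (a - pV a)" using fi a_def by (simp add: algebra_simps)
    have "f (a - pV a) \<in> Z" using fZ pV2 by simp
    hence "pV (f (pV a)) = v" using e that Zs by (intro pVu) (simp_all add: subspace_neg)
    hence "g (pV a) = v" unfolding g_def using pVV[OF pV1] ra_0[OF fa] pV0 by simp
    thus ?thesis using pV1 by blast
  qed
  have gsurj: "surj g"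
  proof -
    have "y \<in> range g" for y
    proof -
      obtain a where a: "a \<in> V" "g a = pV y" using gsV pV1 by blast
      define w where "w = inv f (y - pV y)"
      have wZ: "w \<in> Z" unfolding w_def using fiZ pV2 by simp
      have "g w = f w" unfolding g_def using pVZ[OF wZ] ra_0[OF fa] pV0 by simp
      hence "g w = y - pV y" using fi w_def by simp
      hence "g (a + w) = y" using gad a by simp
      thus ?thesis by (metis rangeI)
    qed
    thus ?thesis by blast
  qed
  have gb: "bij g" using ginj gsurj by (simp add: bij_def)
  have gra: "lie_ring_aut br g" unfolding lie_ring_aut_def using gb gad gbr by blast
  have "g ` V = V" using gV gsV by blast
  hence gla: "lie_algebra_aut br g" using assms(7) gra by blast
  define \<mu> where "\<mu> = f \<circ> inv g"
  have gi: "\<And>x. g (inv g x) = x" using gsurj by (simp add: surj_f_inv_f)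
  have ig: "\<And>x. inv g (g x) = x" using ginj by simp
  have "lie_ring_aut br \<mu>" unfolding \<mu>_def by (rule ra_comp[OF fa ra_inv[OF gra]])
  moreover have "\<mu> x - x \<in> lie_center br" for x
    using gdiff[of "inv g x"] gi ZC unfolding \<mu>_def by simp
  ultimately have "central_aut br \<mu>" unfolding central_aut_def by blast
  moreover have "f = \<mu> \<circ> g" unfolding \<mu>_def using ig by (simp add: fun_eq_iff)
  ultimately show "\<exists>\<mu> g. central_aut br \<mu> \<and> lie_algebra_aut br g \<and> f = \<mu> \<circ> g" using gla by blast
qed

end
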